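(* Let $(M,q)$ be an instance of TNECP and let $\kappa$ be the number of connected components of its associated graph $G$. Then the TNECP instance has at least $2^\kappa-1$ solutions, and if the instance is nondegenerate it has exactly $2^\kappa-1$ solutions.
   Context: $\mathbb{T}=\mathbb{R}\cup\{-\infty\}$, $\oplus=\max$, $\odot=+$; convention $a-(-\infty)=+\infty$. A TNECP instance is $M\in\mathbb{T}^{n\times n}$, $q\in\mathbb{T}^n$ with no all-$(-\infty)$ column in $M$ and no $-\infty$ entry in $q$; a solution is $(w,z)\in\mathbb{T}^n\times\mathbb{T}^n$ with $w\oplus M\odot z=q$ (i.e. $\max(w_i,\max_j(M_{ij}+z_j))=q_i$), $\max_i(w_i+z_i)=-\infty$, and $z$ not the all-$(-\infty)$ vector. The instance is nondegenerate if for each $j$ the minimum $\min_k(q_k-M_{kj})$ is attained by exactly one $k$. The graph $G$ is the bipartite multigraph with row nodes $u_1,\dots,u_n$, column nodes $v_1,\dots,v_n$, a blue edge $u_iv_i$ for every $i$, and a red edge $u_iv_j$ whenever $q_i-M_{ij}=\min_k(q_k-M_{kj})$. *)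

theory Defs
  imports "HOL-Library.Extended_Real"
begin

text \<open>Tropical semiring T = R \<union> {-\<infinity>} is modelled inside ereal as the values \<noteq> \<infinity>.
  max is tropical addition, + is tropical multiplication. In ereal, for finite a,
  a - (-\<infinity>) = \<infinity>, matching the paper's convention.\<close>

definition in_T :: "ereal \<Rightarrow> bool" where
  "in_T a \<longleftrightarrow> a \<noteq> \<infinity>"

definition tnecp_instance :: "('n::finite \<Rightarrow> 'n \<Rightarrow> ereal) \<Rightarrow> ('n \<Rightarrow> ereal) \<Rightarrow> bool" where
  "tnecp_instance M q \<longleftrightarrow>
     (\<forall>i j. in_T (M i j)) \<and>
     (\<forall>j. \<exists>i. M i j \<noteq> -\<infinity>) \<and>
     (\<forall>i. q i \<noteq> -\<infinity> \<and> in_T (q i))"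

definition tnecp_solution ::
  "('n::finite \<Rightarrow> 'n \<Rightarrow> ereal) \<Rightarrow> ('n \<Rightarrow> ereal) \<Rightarrow> ('n \<Rightarrow> ereal) \<Rightarrow> ('n \<Rightarrow> ereal) \<Rightarrow> bool" where
  "tnecp_solution M q w z \<longleftrightarrow>
     (\<forall>i. in_T (w i) \<and> in_T (z i)) \<and>
     (\<forall>i. max (w i) (Max (range (\<lambda>j. M i j + z j))) = q i) \<and>
     Max (range (\<lambda>i. w i + z i)) = -\<infinity> \<and>
     z \<noteq> (\<lambda>_. -\<infinity>)"

definition tnecp_solutions ::
  "('n::finite \<Rightarrow> 'n \<Rightarrow> ereal) \<Rightarrow> ('n \<Rightarrow> ereal) \<Rightarrow> (('n \<Rightarrow> ereal) \<times> ('n \<Rightarrow> ereal)) set" where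
  "tnecp_solutions M q = {(w, z). tnecp_solution M q w z}"

definition tnecp_nondegenerate :: "('n::finite \<Rightarrow> 'n \<Rightarrow> ereal) \<Rightarrow> ('n \<Rightarrow> ereal) \<Rightarrow> bool" where
  "tnecp_nondegenerate M q \<longleftrightarrow>
     (\<forall>j. \<exists>!k. q k - M k j = Min (range (\<lambda>k'. q k' - M k' j)))"

text \<open>Vertices of G: Inl i = row node u_i, Inr j = column node v_j.
  Edge multiplicities are irrelevant for connectivity, so G is recorded as a
  symmetric adjacency relation.\<close>

definition red_edge :: "('n::finite \<Rightarrow> 'n \<Rightarrow> ereal) \<Rightarrow> ('n \<Rightarrow> ereal) \<Rightarrow> 'n \<Rightarrow> 'n \<Rightarrow> bool" where
  "red_edge M q i j \<longleftrightarrow> q i - M i j = Min (range (\<lambda>k. q k - M k j))"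

definition tnecp_graph_edges ::
  "('n::finite \<Rightarrow> 'n \<Rightarrow> ereal) \<Rightarrow> ('n \<Rightarrow> ereal) \<Rightarrow> ('n + 'n) rel" where
  "tnecp_graph_edges M q =
     {(Inl i, Inr j) | i j. i = j \<or> red_edge M q i j} \<union>
     {(Inr j, Inl i) | i j. i = j \<or> red_edge M q i j}"

definition num_components :: "('n::finite \<Rightarrow> 'n \<Rightarrow> ereal) \<Rightarrow> ('n \<Rightarrow> ereal) \<Rightarrow> nat" where
  "num_components M q = card (UNIV // ((tnecp_graph_edges M q)\<^sup>*))"

end

theory Submission
  imports Defs
begin

locale tn =
  fixes M :: "'n::finite \<Rightarrow> 'n \<Rightarrow> ereal" and q :: "'n \<Rightarrow> ereal"
  assumes inst: "tnecp_instance M q"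
begin

definition c where "c j = Min (range (\<lambda>i. q i - M i j))"
definition k where "k j = (SOME i. red_edge M q i j)"

lemma qfin: "q i \<noteq> \<infinity>" "q i \<noteq> -\<infinity>"
  using inst by (auto simp: tnecp_instance_def in_T_def)
lemma Mfin: "M i j \<noteq> \<infinity>"
  using inst by (auto simp: tnecp_instance_def in_T_def)

lemma c_le: "c j \<le> q i - M i j"
  unfolding c_def by (rule Min_le) auto

lemma red_k: "red_edge M q (k j) j"
proof -
  have "Min (range (\<lambda>i. q i - M i j)) \<in> range (\<lambda>i. q i - M i j)"
    by (rule Min_in) auto
  then obtain i where "Min (range (\<lambda>i. q i - M i j)) = q i - M i j" by (rule imageE)
  then have "red_edge M q i j" unfolding red_edge_def by (simp only:)
  then show ?thesis unfolding k_def by (rule someI)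
qed

lemma red_iff: "red_edge M q i j \<longleftrightarrow> q i - M i j = c j"
  unfolding red_edge_def c_def ..

lemma c_fin: "c j \<noteq> \<infinity>" "c j \<noteq> -\<infinity>"
proof -
  obtain i where "M i j \<noteq> -\<infinity>" using inst unfolding tnecp_instance_def by blast
  then have "q i - M i j \<noteq> \<infinity>" using qfin[of i] Mfin[of i j] by (cases "q i"; cases "M i j") auto
  then show "c j \<noteq> \<infinity>" using c_le[of j i] by auto
  have "q (k j) - M (k j) j \<noteq> -\<infinity>" using qfin[of "k j"] Mfin[of "k j" j] by (cases "q (k j)"; cases "M (k j) j") auto
  then show "c j \<noteq> -\<infinity>" using red_k[of j] by (simp add: red_iff)
qed

lemma eq_to_sum: assumes "q i - M i j = c j" shows "M i j + c j = q i" "M i j \<noteq> -\<infinity>"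
  using assms qfin[of i] Mfin[of i j] c_fin[of j] by (cases "q i"; cases "M i j"; cases "c j"; auto)+

lemma sum_le: "M i j + c j \<le> q i"
  using c_le[of j i] qfin[of i] Mfin[of i j] c_fin[of j] by (cases "q i"; cases "M i j"; cases "c j"; auto)

lemma sum_eq_imp: assumes "M i j + x = q i" "x \<le> c j" shows "x = c j" "red_edge M q i j"
proof -
  have "c j \<le> q i - M i j" by (rule c_le)
  then have "x = c j" using assms qfin[of i] Mfin[of i j] c_fin[of j] by (cases "q i"; cases "M i j"; cases "c j"; cases x; auto)
  then show "x = c j" "red_edge M q i j" using assms qfin[of i] Mfin[of i j] c_fin[of j] unfolding red_iff
    by (cases "q i"; cases "M i j"; cases "c j"; auto)+
qed

lemma le_c: assumes "M (k j) j + x \<le> q (k j)" shows "x \<le> c j"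
proof -
  have "M (k j) j + c j = q (k j)" using red_k[of j] eq_to_sum by (simp add: red_iff)
  then show ?thesis using assms Mfin[of "k j" j] c_fin[of j] qfin[of "k j"]
    by (cases "q (k j)"; cases "M (k j) j"; cases "c j"; cases x; auto)
qed


definition sol :: "'n set \<Rightarrow> ('n \<Rightarrow> ereal) \<times> ('n \<Rightarrow> ereal)" where
  "sol S = ((\<lambda>i. if i \<in> S then -\<infinity> else q i), (\<lambda>j. if j \<in> S then c j else -\<infinity>))"

lemma sol_inj: assumes "sol S = sol T" shows "S = T"
proof -
  have "snd (sol S) j = snd (sol T) j" for j using assms by simp
  then have e: "(if j \<in> S then c j else -\<infinity>) = (if j \<in> T then c j else -\<infinity>)" for j
    by (simp add: sol_def)
  show "S = T"
  proof (rule set_eqI)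
    fix j show "j \<in> S \<longleftrightarrow> j \<in> T" using e[of j] c_fin(2)[of j] by (auto split: if_splits)
  qed
qed

lemma sol_ok: assumes "k ` S = S" "S \<noteq> {}" shows "sol S \<in> tnecp_solutions M q"
proof -
  define w where "w = (\<lambda>i. if i \<in> S then -\<infinity> else q i)"
  define z where "z = (\<lambda>j. if j \<in> S then c j else -\<infinity>::ereal)"
  have le: "M i j + z j \<le> q i" for i j
  proof (cases "j \<in> S")
    case False
    have "M i j + -\<infinity> = -\<infinity>" using Mfin[of i j] by (cases "M i j") auto
    moreover have "z j = -\<infinity>" using False by (simp add: z_def)
    ultimately have e: "M i j + z j = -\<infinity>" by (simp only:)
    show ?thesis unfolding e by simp
  qed (use sum_le[of i j] in \<open>simp add: z_def\<close>)
  have MX: "Max (range (\<lambda>j. M i j + z j)) \<le> q i" for i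
    using le by (simp add: Max_le_iff)
  have row: "max (w i) (Max (range (\<lambda>j. M i j + z j))) = q i" for i
  proof (cases "i \<in> S")
    case True
    then have "i \<in> k ` S" using assms(1) by simp
    then obtain j where j: "j \<in> S" "i = k j" by (rule imageE) auto
    have "M i j + z j = q i" using j red_k[of j] eq_to_sum(1)[of i j] by (simp add: z_def red_iff)
    then have "Max (range (\<lambda>j. M i j + z j)) \<ge> q i"
      by (intro Max_ge) (auto intro: range_eqI[where x=j] simp del: range_eqI)
    then show ?thesis using MX[of i] True by (simp add: w_def)
  next
    case False then show ?thesis using MX[of i] by (simp add: w_def)
  qed
  have wz: "w i + z i = -\<infinity>" for i
    using qfin[of i] c_fin[of i] by (auto simp: w_def z_def)
  have "range (\<lambda>i. w i + z i) = {-\<infinity>}" using wz by auto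
  then have "Max (range (\<lambda>i. w i + z i)) = -\<infinity>" by simp
  moreover have "z \<noteq> (\<lambda>_. -\<infinity>)"
  proof
    assume "z = (\<lambda>_. -\<infinity>)"
    obtain j where "j \<in> S" using assms(2) by blast
    then have "z j = c j" by (simp add: z_def)
    then show False using \<open>z = (\<lambda>_. -\<infinity>)\<close> c_fin[of j] by simp
  qed
  moreover have "in_T (w i) \<and> in_T (z i)" for i
    using qfin[of i] c_fin[of i] by (auto simp: w_def z_def in_T_def)
  ultimately have "tnecp_solution M q w z" unfolding tnecp_solution_def using row by blast
  then show ?thesis unfolding tnecp_solutions_def sol_def w_def z_def by simp
qed


definition R where "R = tnecp_graph_edges M q"
definition Comp where "Comp = UNIV // (R\<^sup>*)"

lemma R_edge: "i = j \<or> red_edge M q i j \<Longrightarrow> (Inl i, Inr j) \<in> R" "i = j \<or> red_edge M q i j \<Longrightarrow> (Inr j, Inl i) \<in> R"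
  unfolding R_def tnecp_graph_edges_def by blast+

lemma R_cases: "(a, b) \<in> R \<Longrightarrow> (\<exists>i j. (i = j \<or> red_edge M q i j) \<and> ((a = Inl i \<and> b = Inr j) \<or> (a = Inr j \<and> b = Inl i)))"
  unfolding R_def tnecp_graph_edges_def by blast

lemma symR: "sym R"
  unfolding sym_def using R_cases R_edge by blast

lemma equivR: "equiv UNIV (R\<^sup>*)"
  unfolding equiv_def using symR by (auto simp: sym_rtrancl trans_rtrancl refl_rtrancl)

lemma Rk: "(Inl (k j), Inl j) \<in> R\<^sup>*"
proof -
  have "(Inl (k j), Inr j) \<in> R" using red_k by (intro R_edge) auto
  moreover have "(Inr j, Inl j) \<in> R" by (intro R_edge) auto
  ultimately show ?thesis by auto
qed

lemma class_rel: "X \<in> Comp \<Longrightarrow> a \<in> X \<Longrightarrow> b \<in> X \<Longrightarrow> (a, b) \<in> R\<^sup>*"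
proof -
  assume "X \<in> Comp" "a \<in> X" "b \<in> X"
  then obtain x where "X = R\<^sup>* `` {x}" unfolding Comp_def by (auto elim: quotientE)
  then have "(x, a) \<in> R\<^sup>*" "(x, b) \<in> R\<^sup>*" using \<open>a \<in> X\<close> \<open>b \<in> X\<close> by auto
  moreover have "sym (R\<^sup>*)" using symR by (simp add: sym_rtrancl)
  ultimately have "(a, x) \<in> R\<^sup>*" "(x, b) \<in> R\<^sup>*" by (auto dest: symD)
  then show ?thesis by simp
qed

lemma class_closed: "X \<in> Comp \<Longrightarrow> a \<in> X \<Longrightarrow> (a, b) \<in> R\<^sup>* \<Longrightarrow> b \<in> X"
proof -
  assume "X \<in> Comp" "a \<in> X" "(a, b) \<in> R\<^sup>*"
  then obtain x where "X = R\<^sup>* `` {x}" unfolding Comp_def by (auto elim: quotientE)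
  then show ?thesis using \<open>a \<in> X\<close> \<open>(a, b) \<in> R\<^sup>*\<close> by auto
qed

lemma class_k: "X \<in> Comp \<Longrightarrow> Inl i \<in> X \<Longrightarrow> Inl (k i) \<in> X"
proof -
  assume "X \<in> Comp" "Inl i \<in> X"
  moreover have "sym (R\<^sup>*)" using symR by (simp add: sym_rtrancl)
  then have "(Inl i, Inl (k i)) \<in> R\<^sup>*" using Rk by (auto dest: symD)
  ultimately show ?thesis using class_closed by blast
qed

lemma class_kpow: "X \<in> Comp \<Longrightarrow> Inl i \<in> X \<Longrightarrow> Inl ((k^^n) i) \<in> X"
  by (induction n) (auto intro: class_k)

lemma class_Inl: "X \<in> Comp \<Longrightarrow> \<exists>i. Inl i \<in> X"
proof -
  assume X: "X \<in> Comp"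
  then obtain x where "X = R\<^sup>* `` {x}" unfolding Comp_def by (auto elim: quotientE)
  then obtain a where a: "a \<in> X" by blast
  show ?thesis
  proof (cases a)
    case (Inl i) then show ?thesis using a by blast
  next
    case (Inr j)
    have "(Inr j, Inl j) \<in> R" by (intro R_edge) auto
    then show ?thesis using class_closed[OF X a] Inr by blast
  qed
qed

lemma class_disj: "X \<in> Comp \<Longrightarrow> Y \<in> Comp \<Longrightarrow> a \<in> X \<Longrightarrow> a \<in> Y \<Longrightarrow> X = Y"
  unfolding Comp_def using equivR quotient_disj by blast

lemma class_of: "R\<^sup>* `` {a} \<in> Comp" "a \<in> R\<^sup>* `` {a}"
  unfolding Comp_def by (auto intro: quotientI)

definition m where "m = (SOME m. \<forall>m'. card (range (k^^m)) \<le> card (range (k^^m')))"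
definition P where "P = range (k^^m)"

lemma m_min: "card (range (k^^m)) \<le> card (range (k^^m'))"
proof -
  have "\<exists>m. True \<and> (\<forall>m'. True \<longrightarrow> card (range (k^^m)) \<le> card (range (k^^m')))"
    by (rule ex_has_least_nat) simp
  then have "\<exists>m. \<forall>m'. card (range (k^^m)) \<le> card (range (k^^m'))" by simp
  then show ?thesis unfolding m_def by (rule someI_ex[where P="\<lambda>m. \<forall>m'. card (range (k^^m)) \<le> card (range (k^^m'))", THEN spec])
qed

lemma kP: "k ` P = P"
proof -
  have e: "range (k^^Suc m) = k ` P" unfolding P_def by (auto simp: image_comp)
  have sub: "range (k^^Suc m) \<subseteq> P" unfolding P_def by (auto simp: funpow_Suc_right simp del: funpow.simps)
  moreover have "card (range (k^^Suc m)) = card P" using m_min[of "Suc m"] sub unfolding P_def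
    by (simp add: card_mono order_antisym)
  ultimately have "range (k^^Suc m) = P" by (intro card_subset_eq) auto
  then show ?thesis using e by simp
qed

lemma injP: "inj_on k P"
  using kP by (intro eq_card_imp_inj_on) auto

lemma kpow_P: "(k^^m) i \<in> P" unfolding P_def by simp

lemma P_iff: assumes "S \<subseteq> P" "k ` S = S" "x \<in> P" shows "k x \<in> S \<longleftrightarrow> x \<in> S"
proof
  assume "k x \<in> S"
  then have "k x \<in> k ` S" using assms by simp
  then obtain y where "y \<in> S" "k x = k y" by auto
  moreover have "y \<in> P" using \<open>y \<in> S\<close> assms(1) by blast
  ultimately show "x \<in> S" using injP assms(3) by (auto dest: inj_onD)
next
  assume "x \<in> S" then show "k x \<in> S" using assms by blast
qed

lemma P_closed: "x \<in> P \<Longrightarrow> k x \<in> P" using kP by blast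

lemma P_iff_pow: assumes "S \<subseteq> P" "k ` S = S" "x \<in> P" shows "(k^^n) x \<in> S \<longleftrightarrow> x \<in> S"
proof -
  have "(k^^n) x \<in> P \<and> ((k^^n) x \<in> S \<longleftrightarrow> x \<in> S)"
  proof (induction n)
    case 0 then show ?case using assms by simp
  next
    case (Suc n) then show ?case using P_iff[OF assms(1,2)] P_closed by simp
  qed
  then show ?thesis by simp
qed

lemma inv_sub_P: assumes "k ` S = S" shows "S \<subseteq> P"
proof -
  have "(k^^n) ` S = S" for n
  proof (induction n)
    case (Suc n)
    have "(k^^Suc n) ` S = k ` ((k^^n) ` S)" by (simp add: image_comp)
    then show ?case using Suc assms by simp
  qed simp
  then have "S = (k^^m) ` S" by simp
  also have "\<dots> \<subseteq> P" unfolding P_def by auto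
  finally show ?thesis .
qed

definition SF where "SF F = P \<inter> {i. \<exists>X\<in>F. Inl i \<in> X}"

lemma SF_k: assumes "F \<subseteq> Comp" shows "k ` SF F = SF F"
proof -
  have sub: "k ` SF F \<subseteq> SF F" unfolding SF_def using assms P_closed class_k by blast
  have "SF F \<subseteq> P" unfolding SF_def by blast
  then have "inj_on k (SF F)" using injP inj_on_subset by blast
  then have "card (k ` SF F) = card (SF F)" by (rule card_image)
  then show ?thesis using sub by (intro card_subset_eq) auto
qed

lemma class_P: assumes "X \<in> Comp" shows "\<exists>p\<in>P. Inl p \<in> X"
proof -
  obtain i where "Inl i \<in> X" using class_Inl assms by blast
  then show ?thesis using class_kpow[OF assms] kpow_P by blast
qed

lemma SF_ne: "F \<subseteq> Comp \<Longrightarrow> F \<noteq> {} \<Longrightarrow> SF F \<noteq> {}"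
  unfolding SF_def using class_P by blast

lemma SF_inj: assumes "F \<subseteq> Comp" "G \<subseteq> Comp" "SF F = SF G" shows "F = G"
proof -
  have "X \<in> B" if "A \<subseteq> Comp" "B \<subseteq> Comp" "SF A = SF B" "X \<in> A" for A B X
  proof -
    have "X \<in> Comp" using that by blast
    then obtain p where p: "p \<in> P" "Inl p \<in> X" using class_P by blast
    then have "p \<in> SF B" using that unfolding SF_def[of A, symmetric] by (auto simp: SF_def)
    then obtain Y where "Y \<in> B" "Inl p \<in> Y" unfolding SF_def by blast
    then show ?thesis using class_disj[of X Y] p that by blast
  qed
  then show ?thesis using assms by blast
qed


lemma nondeg_k: assumes "tnecp_nondegenerate M q" "red_edge M q i j" shows "i = k j"
  using assms red_k[of j] unfolding tnecp_nondegenerate_def red_edge_def by blast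

lemma classify: assumes nd: "tnecp_nondegenerate M q" and sl: "tnecp_solution M q w z"
  shows "\<exists>S. k ` S = S \<and> S \<noteq> {} \<and> (w, z) = sol S"
proof -
  have fin: "w i \<noteq> \<infinity>" "z i \<noteq> \<infinity>" for i using sl by (auto simp: tnecp_solution_def in_T_def)
  have row: "max (w i) (Max (range (\<lambda>j. M i j + z j))) = q i" for i
    using sl by (auto simp: tnecp_solution_def)
  have cm: "Max (range (\<lambda>i. w i + z i)) = -\<infinity>" and nz: "z \<noteq> (\<lambda>_. -\<infinity>)"
    using sl by (auto simp: tnecp_solution_def)
  have le: "M i j + z j \<le> q i" for i j
  proof -
    have "M i j + z j \<le> Max (range (\<lambda>j. M i j + z j))" by (intro Max_ge) auto
    also have "\<dots> \<le> q i" using row[of i] by (metis max.cobounded2)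
    finally show ?thesis .
  qed
  have zc: "z j \<le> c j" for j using le_c le by blast
  have wz: "w i + z i = -\<infinity>" for i
  proof -
    have "w i + z i \<le> Max (range (\<lambda>i. w i + z i))" by (intro Max_ge) auto
    then show ?thesis using cm by simp
  qed
  define S where "S = {j. z j \<noteq> -\<infinity>}"
  have tight: "\<exists>j\<in>S. z j = c j \<and> i = k j" if "Max (range (\<lambda>j. M i j + z j)) = q i" for i
  proof -
    have "Max (range (\<lambda>j. M i j + z j)) \<in> range (\<lambda>j. M i j + z j)" by (intro Max_in) auto
    then obtain j where "Max (range (\<lambda>j. M i j + z j)) = M i j + z j" by (rule imageE)
    then have e: "M i j + z j = q i" using that by simp
    have "z j = c j" "red_edge M q i j" using sum_eq_imp[OF e zc] by auto
    moreover have "i = k j" using nondeg_k[OF nd] \<open>red_edge M q i j\<close> by blast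
    ultimately show ?thesis using c_fin[of j] by (intro bexI[of _ j]) (auto simp: S_def)
  qed
  have winS: "w i = -\<infinity>" if "i \<in> S" for i
    using wz[of i] fin[of i] that unfolding S_def by (cases "w i"; cases "z i"; auto)
  define T where "T = {j\<in>S. z j = c j}"
  have "S \<subseteq> k ` T"
  proof
    fix i assume "i \<in> S"
    then have "Max (range (\<lambda>j. M i j + z j)) = q i" using row[of i] winS[of i] by simp
    then show "i \<in> k ` T" using tight unfolding T_def by blast
  qed
  have TS: "T \<subseteq> S" unfolding T_def by blast
  have c1: "card S \<le> card (k ` T)" using \<open>S \<subseteq> k ` T\<close> by (simp add: card_mono)
  also have "\<dots> \<le> card T" by (simp add: card_image_le)
  finally have "card S \<le> card T" .
  moreover have "card T \<le> card S" using TS by (simp add: card_mono)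
  ultimately have "T = S" using TS by (intro card_subset_eq) auto
  then have "S \<subseteq> k ` S" using \<open>S \<subseteq> k ` T\<close> by simp
  moreover have "card (k ` S) \<le> card S" by (simp add: card_image_le)
  ultimately have kS: "k ` S = S"
    by (metis card_seteq finite)
  have woutS: "w i = q i" if "i \<notin> S" for i
  proof (cases "Max (range (\<lambda>j. M i j + z j)) = q i")
    case True
    then obtain j where "j \<in> S" "i = k j" using tight by blast
    then have "i \<in> S" using kS by blast
    then show ?thesis using that by blast
  next
    case False
    then show ?thesis using row[of i] by (metis max_def)
  qed
  have "(w, z) = sol S"
  proof -
    have "w = (\<lambda>i. if i \<in> S then -\<infinity> else q i)" using winS woutS by auto
    moreover have "z = (\<lambda>j. if j \<in> S then c j else -\<infinity>)"
    proof
      fix j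
      show "z j = (if j \<in> S then c j else -\<infinity>)"
      proof (cases "j \<in> S")
        case True then have "j \<in> T" using \<open>T = S\<close> by simp
        then show ?thesis using True unfolding T_def by simp
      qed (simp add: S_def)
    qed
    ultimately show ?thesis unfolding sol_def by simp
  qed
  moreover have "S \<noteq> {}" using nz unfolding S_def by auto
  ultimately show ?thesis using kS by blast
qed

lemma S_SF: assumes nd: "tnecp_nondegenerate M q" and kS: "k ` S = S"
  shows "S = SF {X \<in> Comp. \<exists>i\<in>S. Inl i \<in> X}"
proof -
  have SP: "S \<subseteq> P" using inv_sub_P[OF kS] .
  define g where "g a = (case a of Inl i \<Rightarrow> (k^^m) i \<in> S | Inr j \<Rightarrow> (k^^m) j \<in> S)" for a
  have gk: "(k^^m) (k j) \<in> S \<longleftrightarrow> (k^^m) j \<in> S" for j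
  proof -
    have "(k^^m) (k j) = k ((k^^m) j)" by (simp add: funpow_swap1)
    then show ?thesis using P_iff[OF SP kS kpow_P] by simp
  qed
  have gR: "g a = g b" if ab: "(a, b) \<in> R" for a b
  proof -
    obtain i j where ij: "i = j \<or> red_edge M q i j" "(a = Inl i \<and> b = Inr j) \<or> (a = Inr j \<and> b = Inl i)"
      using R_cases[OF ab] by blast
    then have "i = k j \<or> i = j" using nondeg_k[OF nd] by blast
    then show ?thesis using ij(2) gk unfolding g_def by auto
  qed
  have gRs: "g a = g b" if "(a, b) \<in> R\<^sup>*" for a b
    using that by (induction rule: rtrancl_induct) (auto dest: gR)
  show ?thesis
  proof
    show "S \<subseteq> SF {X \<in> Comp. \<exists>i\<in>S. Inl i \<in> X}"
    proof
      fix i assume "i \<in> S"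
      then show "i \<in> SF {X \<in> Comp. \<exists>i\<in>S. Inl i \<in> X}"
        unfolding SF_def using SP class_of[of "Inl i"] by blast
    qed
  next
    show "SF {X \<in> Comp. \<exists>i\<in>S. Inl i \<in> X} \<subseteq> S"
    proof
      fix p assume "p \<in> SF {X \<in> Comp. \<exists>i\<in>S. Inl i \<in> X}"
      then obtain X s where X: "p \<in> P" "X \<in> Comp" "Inl p \<in> X" "s \<in> S" "Inl s \<in> X"
        unfolding SF_def by blast
      then have "g (Inl s) = g (Inl p)" using class_rel gRs by blast
      moreover have "g (Inl s)" using P_iff_pow[OF SP kS, of s m] X SP unfolding g_def by auto
      ultimately have "(k^^m) p \<in> S" unfolding g_def by simp
      then show "p \<in> S" using P_iff_pow[OF SP kS X(1)] by simp
    qed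
  qed
qed


end

theorem theorem3p4:
  fixes M :: "'n::finite \<Rightarrow> 'n \<Rightarrow> ereal" and q :: "'n \<Rightarrow> ereal"
  assumes "tnecp_instance M q"
  shows "(infinite (tnecp_solutions M q) \<or> 2 ^ num_components M q - 1 \<le> card (tnecp_solutions M q))
         \<and> (tnecp_nondegenerate M q \<longrightarrow>
           finite (tnecp_solutions M q) \<and> card (tnecp_solutions M q) = 2 ^ num_components M q - 1)"
proof -
  interpret tn M q by unfold_locales (rule assms)
  define D where "D = Pow Comp - {{}}"
  define f where "f F = sol (SF (F :: ('n + 'n) set set))" for F
  have fC: "finite Comp" by (rule finite_subset[of _ "Pow UNIV"]) (auto simp: Comp_def quotient_def)
  have nc: "num_components M q = card Comp" unfolding num_components_def Comp_def R_def ..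
  have cardD: "card D = 2 ^ num_components M q - 1"
    unfolding D_def nc using fC by (simp add: card_Diff_singleton card_Pow)
  have inj: "inj_on f D"
  proof (rule inj_onI)
    fix F G assume "F \<in> D" "G \<in> D" "f F = f G"
    then have "SF F = SF G" unfolding f_def by (intro sol_inj) simp
    then show "F = G" using \<open>F \<in> D\<close> \<open>G \<in> D\<close> SF_inj unfolding D_def by blast
  qed
  have sub: "f ` D \<subseteq> tnecp_solutions M q"
  proof
    fix x assume "x \<in> f ` D"
    then obtain F where F: "F \<subseteq> Comp" "F \<noteq> {}" "x = f F" unfolding D_def by blast
    show "x \<in> tnecp_solutions M q" unfolding F(3) f_def
      by (rule sol_ok) (simp_all add: SF_k[OF F(1)] SF_ne[OF F(1,2)])
  qed
  have fD: "finite D" unfolding D_def using fC by simp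
  have part1: "infinite (tnecp_solutions M q) \<or> 2 ^ num_components M q - 1 \<le> card (tnecp_solutions M q)"
    using card_inj_on_le[OF inj sub] cardD by auto
  have part2: "finite (tnecp_solutions M q) \<and> card (tnecp_solutions M q) = 2 ^ num_components M q - 1"
    if nd: "tnecp_nondegenerate M q"
  proof -
    have "tnecp_solutions M q \<subseteq> f ` D"
    proof
      fix x assume "x \<in> tnecp_solutions M q"
      then obtain w z where x: "x = (w, z)" "tnecp_solution M q w z" unfolding tnecp_solutions_def by blast
      obtain S where S: "k ` S = S" "S \<noteq> {}" "(w, z) = sol S" using classify[OF nd x(2)] by blast
      define F where "F = {X \<in> Comp. \<exists>i\<in>S. Inl i \<in> X}"
      have "S = SF F" unfolding F_def by (rule S_SF[OF nd S(1)])
      moreover have "F \<noteq> {}" unfolding F_def using S(2) class_of by blast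
      moreover have "F \<subseteq> Comp" unfolding F_def by blast
      ultimately have "F \<in> D" "x = f F" unfolding D_def f_def using x S by auto
      then show "x \<in> f ` D" by blast
    qed
    then have eq: "tnecp_solutions M q = f ` D" using sub by blast
    show ?thesis unfolding eq using fD card_image[OF inj] cardD by simp
  qed
  show ?thesis using part1 part2 by blast
qed

end
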